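(* Let $L$ be a positive integer and let $a,b,s$ be integers with $a\mid L$, $b\mid L$, $0\le s<b$ and $s\in\frac{ab}{\gcd(ab,L)}\mathbb{Z}$. Let $k_1,k_2\in\mathbb{Z}$ satisfy $k_1s+k_2b=\gcd(b,s)$, and set $\tilde b=\gcd(b,s)$, $\tilde a=ab/\gcd(b,s)$, $\tilde s=k_1a$. Then $$\begin{pmatrix} a & 0\\ s & b\end{pmatrix}\mathbb{Z}_L^2=\begin{pmatrix} \tilde a & \tilde s\\ 0 & \tilde b\end{pmatrix}\mathbb{Z}_L^2 .$$
   Context: $\mathbb{Z}_L=\mathbb{Z}/L\mathbb{Z}$; for an integer matrix $A$, $A\mathbb{Z}_L^2=\{Az\bmod L: z\in\mathbb{Z}_L^2\}$. Here $\gcd(b,0)=b$. *)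

theory Defs
  imports Main
begin

definition mat_image_ZL :: "int \<Rightarrow> int \<Rightarrow> int \<Rightarrow> int \<Rightarrow> int \<Rightarrow> (int \<times> int) set" where
  "mat_image_ZL L p q r t =
     {((p * x + q * y) mod L, (r * x + t * y) mod L) | x y. x \<in> {0..<L} \<and> y \<in> {0..<L}}"

end

theory Submission
  imports Defs
begin

lemma img_alt:
  assumes "L > 0"
  shows "mat_image_ZL L p q r t = {((p * x + q * y) mod L, (r * x + t * y) mod L) | x y. True}"
proof -
  have "((p * x + q * y) mod L, (r * x + t * y) mod L) \<in> mat_image_ZL L p q r t" for x y
  proof -
    have "(p * x + q * y) mod L = (p * (x mod L) + q * (y mod L)) mod L"
      by (metis mod_add_cong mod_mult_right_eq)
    moreover have "(r * x + t * y) mod L = (r * (x mod L) + t * (y mod L)) mod L"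
      by (metis mod_add_cong mod_mult_right_eq)
    ultimately show ?thesis unfolding mat_image_ZL_def using assms
      by (intro CollectI exI[of _ "x mod L"] exI[of _ "y mod L"]) auto
  qed
  then show ?thesis unfolding mat_image_ZL_def by blast
qed

theorem proposition2p2:
  fixes L a b s k1 k2 :: int
  assumes "L > 0"
    and "a dvd L" and "b dvd L"
    and "0 \<le> s" and "s < b"
    and "((a * b) div gcd (a * b) L) dvd s"
    and "k1 * s + k2 * b = gcd b s"
  shows "mat_image_ZL L a 0 s b =
         mat_image_ZL L ((a * b) div gcd b s) (k1 * a) 0 (gcd b s)"
proof -
  define g where "g = gcd b s"
  have gpos: "g > 0" using assms(4,5) unfolding g_def by simp
  obtain b' where b': "b = g * b'" unfolding g_def by (meson gcd_dvd1 dvdE)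
  obtain s' where s': "s = g * s'" unfolding g_def by (meson gcd_dvd2 dvdE)
  have "g * (k1 * s' + k2 * b') = g * 1" using assms(7) b' s' unfolding g_def[symmetric]
    by (simp add: algebra_simps)
  hence one: "k1 * s' + k2 * b' = 1" using gpos by simp
  have at: "(a * b) div g = a * b'" using b' gpos by simp
  show ?thesis
    unfolding img_alt[OF assms(1)] g_def[symmetric] at
  proof (intro set_eqI iffI)
    fix z assume "z \<in> {((a * x + 0 * y) mod L, (s * x + b * y) mod L) | x y. True}"
    then obtain x y where z: "z = ((a * x + 0 * y) mod L, (s * x + b * y) mod L)" by blast
    have e1: "a * b' * (k2 * x - k1 * y) + k1 * a * (s' * x + b' * y) = a * x + 0 * y"
    proof -
      have "a * b' * (k2 * x - k1 * y) + k1 * a * (s' * x + b' * y) = a * x * (k1 * s' + k2 * b')"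
        by (simp add: algebra_simps)
      thus ?thesis using one by simp
    qed
    have e2: "0 * (k2 * x - k1 * y) + g * (s' * x + b' * y) = s * x + b * y"
      using b' s' by (simp add: algebra_simps)
    show "z \<in> {((a * b' * x + k1 * a * y) mod L, (0 * x + g * y) mod L) | x y. True}"
      using z e1 e2 by (intro CollectI exI[of _ "k2 * x - k1 * y"] exI[of _ "s' * x + b' * y"]) simp
  next
    fix z assume "z \<in> {((a * b' * x + k1 * a * y) mod L, (0 * x + g * y) mod L) | x y. True}"
    then obtain x y where z: "z = ((a * b' * x + k1 * a * y) mod L, (0 * x + g * y) mod L)" by blast
    have e1: "a * (b' * x + k1 * y) + 0 * (k2 * y - s' * x) = a * b' * x + k1 * a * y"
      by (simp add: algebra_simps)
    have e2: "s * (b' * x + k1 * y) + b * (k2 * y - s' * x) = 0 * x + g * y"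
    proof -
      have "s * (b' * x + k1 * y) + b * (k2 * y - s' * x) = g * y * (k1 * s' + k2 * b')"
        using b' s' by (simp add: algebra_simps)
      thus ?thesis using one by simp
    qed
    show "z \<in> {((a * x + 0 * y) mod L, (s * x + b * y) mod L) | x y. True}"
      using z e1 e2 by (intro CollectI exI[of _ "b' * x + k1 * y"] exI[of _ "k2 * y - s' * x"]) simp
  qed
qed

end
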